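(* Let $u$ be a countable transitive model of $\mathsf{ZF}$ minus Power Set, let $\mathbb P\in u$ be a partial order with ordering $\le^{\mathbb P}$ and least element $0^{\mathbb P}$, and let $I$ be a non-empty ideal on $\mathbb P$. Let $\mathcal M$ be the development model defined below and let $\tilde\in^{\mathcal M}=\{(\sigma,\tau)\in u^{\mathbb P}\times u^{\mathbb P}:\mathcal M\models\Diamond\Box\,\sigma\in^*\tau\}$. Then $\tilde\in^{\mathcal M}$ is well-founded on $u^{\mathbb P}$, and the Mostowski collapse $\mathrm{mos}$ of $\langle u^{\mathbb P},\tilde\in^{\mathcal M}\rangle$, defined by $\tilde\in^{\mathcal M}$-recursion as $\mathrm{mos}(\tau)=\{\mathrm{mos}(\sigma):\sigma\mathrel{\tilde\in}^{\mathcal M}\tau\}$, satisfies $\mathrm{mos}(\tau)=\mathrm{val}_I(\tau)$ for all $\tau\in u^{\mathbb P}$; consequently the collapsed structure $\langle\{\mathrm{mos}(\tau):\tau\in u^{\mathbb P}\},\in\rangle$ equals the forcing extension $u[I]$.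
   Context: A $\mathbb P$-name is (by $\in$-recursion) a set of ordered pairs $\langle\sigma,p\rangle$ with $\sigma$ a $\mathbb P$-name and $p\in\mathbb P$; $u^{\mathbb P}$ is the set of $\mathbb P$-names belonging to $u$. An ideal on $\mathbb P$ is a set $I\subseteq\mathbb P$ that is downward closed ($q\le^{\mathbb P}p\in I\Rightarrow q\in I$) and directed (any two elements of $I$ have a common upper bound in $I$). (This is the reverse of the usual forcing convention: $I$ plays the role of a filter.) By $\in$-recursion, $\mathrm{val}_I(\tau)=\{\mathrm{val}_I(\sigma):\exists q\in I\,\langle\sigma,q\rangle\in\tau\}$, and $u[I]=\langle\{\mathrm{val}_I(\sigma):\sigma\in u^{\mathbb P}\},\in\rangle$. The development model $\mathcal M$: states are the elements of $I$, the accessibility relation is $\le^{\mathbb P}$ restricted to $I$; at every state $s$ the structure has domain $u^{\mathbb P}$ with the (static) relation $\in$, and a dynamic binary relation $\in^*$ interpreted at $s$ by: $x\in^* y$ iff $x,y\in u^{\mathbb P}$ and there is $s'\le^{\mathbb P}s$ with $\langle x,s'\rangle\in y$. Modal semantics: $\Diamond\psi$ holds at $s$ iff $\psi$ holds at some state $t\ge s$, $\Box$ dually, and $\mathcal M\models\psi$ means $\psi$ holds at every state. *)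

theory Defs
  imports Main "HOL-Library.Countable_Set_Type"
begin

text \<open>Since u is a countable transitive model, every set relevant to the
statement (elements of u, the ideal I, and the values in u[I]) is hereditarily
countable.  We therefore work in the universe V of hereditarily countable,
well-founded sets, realised as a nested datatype.\<close>

datatype V = Set "V cset"

primrec elts :: "V \<Rightarrow> V set" where
  "elts (Set A) = rcset A"

definition mk :: "V set \<Rightarrow> V" where
  "mk A = Set (acset A)"

definition memrel :: "(V \<times> V) set" where
  "memrel = {(x, y). x \<in> elts y}"

definition vpair :: "V \<Rightarrow> V \<Rightarrow> V" where
  "vpair a b = mk {mk {a}, mk {a, b}}"

datatype fm = Mem nat nat | Eq nat nat | Neg fm | Conj fm fm | Ex nat fm

fun sat :: "V set \<Rightarrow> (nat \<Rightarrow> V) \<Rightarrow> fm \<Rightarrow> bool" where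
  "sat M e (Mem i j) = (e i \<in> elts (e j))"
| "sat M e (Eq i j) = (e i = e j)"
| "sat M e (Neg \<phi>) = (\<not> sat M e \<phi>)"
| "sat M e (Conj \<phi> \<psi>) = (sat M e \<phi> \<and> sat M e \<psi>)"
| "sat M e (Ex v \<phi>) = (\<exists>a\<in>M. sat M (e(v := a)) \<phi>)"

definition transitive_set :: "V set \<Rightarrow> bool" where
  "transitive_set M \<longleftrightarrow> (\<forall>x\<in>M. elts x \<subseteq> M)"

definition ZF_minus_model :: "V set \<Rightarrow> bool" where
  "ZF_minus_model M \<longleftrightarrow>
     \<comment> \<open>Extensionality\<close>
     (\<forall>a\<in>M. \<forall>b\<in>M. (\<forall>c\<in>M. c \<in> elts a \<longleftrightarrow> c \<in> elts b) \<longrightarrow> a = b) \<and>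
     \<comment> \<open>Foundation\<close>
     (\<forall>a\<in>M. (\<exists>c\<in>M. c \<in> elts a) \<longrightarrow>
        (\<exists>c\<in>M. c \<in> elts a \<and> (\<forall>d\<in>M. d \<in> elts c \<longrightarrow> d \<notin> elts a))) \<and>
     \<comment> \<open>Pairing\<close>
     (\<forall>a\<in>M. \<forall>b\<in>M. \<exists>c\<in>M. a \<in> elts c \<and> b \<in> elts c) \<and>
     \<comment> \<open>Union\<close>
     (\<forall>a\<in>M. \<exists>c\<in>M. \<forall>b\<in>M. b \<in> elts a \<longrightarrow> (\<forall>d\<in>M. d \<in> elts b \<longrightarrow> d \<in> elts c)) \<and>
     \<comment> \<open>Infinity\<close>
     (\<exists>c\<in>M. (\<exists>z\<in>M. z \<in> elts c \<and> (\<forall>w\<in>M. w \<notin> elts z)) \<and>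
        (\<forall>x\<in>M. x \<in> elts c \<longrightarrow>
           (\<exists>y\<in>M. y \<in> elts c \<and> (\<forall>w\<in>M. w \<in> elts y \<longleftrightarrow> w \<in> elts x \<or> w = x)))) \<and>
     \<comment> \<open>Separation schema\<close>
     (\<forall>\<phi> e. range e \<subseteq> M \<longrightarrow> (\<forall>a\<in>M. \<exists>b\<in>M. \<forall>x\<in>M.
        x \<in> elts b \<longleftrightarrow> x \<in> elts a \<and> sat M (e(0 := x)) \<phi>)) \<and>
     \<comment> \<open>Replacement schema\<close>
     (\<forall>\<phi> e. range e \<subseteq> M \<longrightarrow> (\<forall>a\<in>M.
        (\<forall>x\<in>M. x \<in> elts a \<longrightarrow>
           (\<exists>y\<in>M. sat M (e(0 := x, 1 := y)) \<phi> \<and>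
              (\<forall>y'\<in>M. sat M (e(0 := x, 1 := y')) \<phi> \<longrightarrow> y' = y))) \<longrightarrow>
        (\<exists>b\<in>M. \<forall>y\<in>M. y \<in> elts b \<longleftrightarrow> (\<exists>x\<in>M. x \<in> elts a \<and> sat M (e(0 := x, 1 := y)) \<phi>))))"

definition countable_transitive_ZF_minus_model :: "V set \<Rightarrow> bool" where
  "countable_transitive_ZF_minus_model M \<longleftrightarrow>
     countable M \<and> transitive_set M \<and> ZF_minus_model M"

definition leq :: "V \<Rightarrow> V \<Rightarrow> V \<Rightarrow> bool" where
  "leq leP p q \<longleftrightarrow> vpair p q \<in> elts leP"

definition partial_order_least :: "V \<Rightarrow> V \<Rightarrow> V \<Rightarrow> bool" where
  "partial_order_least Pset leP zero \<longleftrightarrow>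
     (\<forall>z\<in>elts leP. \<exists>p\<in>elts Pset. \<exists>q\<in>elts Pset. z = vpair p q) \<and>
     (\<forall>p\<in>elts Pset. leq leP p p) \<and>
     (\<forall>p\<in>elts Pset. \<forall>q\<in>elts Pset. leq leP p q \<and> leq leP q p \<longrightarrow> p = q) \<and>
     (\<forall>p\<in>elts Pset. \<forall>q\<in>elts Pset. \<forall>r\<in>elts Pset.
        leq leP p q \<and> leq leP q r \<longrightarrow> leq leP p r) \<and>
     zero \<in> elts Pset \<and> (\<forall>p\<in>elts Pset. leq leP zero p)"

inductive is_name :: "V \<Rightarrow> V \<Rightarrow> bool" for Pset :: V where
  "(\<forall>z\<in>elts \<tau>. \<exists>\<sigma> p. z = vpair \<sigma> p \<and> is_name Pset \<sigma> \<and> p \<in> elts Pset)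
     \<Longrightarrow> is_name Pset \<tau>"

definition names_in :: "V set \<Rightarrow> V \<Rightarrow> V set" where
  "names_in u Pset = {\<tau> \<in> u. is_name Pset \<tau>}"

text \<open>Ideal in the paper's (reversed) convention: downward closed and directed.\<close>

definition is_ideal :: "V \<Rightarrow> V \<Rightarrow> V set \<Rightarrow> bool" where
  "is_ideal Pset leP I \<longleftrightarrow> I \<subseteq> elts Pset \<and>
     (\<forall>p\<in>I. \<forall>q\<in>elts Pset. leq leP q p \<longrightarrow> q \<in> I) \<and>
     (\<forall>p\<in>I. \<forall>q\<in>I. \<exists>r\<in>I. leq leP p r \<and> leq leP q r)"

definition val :: "V set \<Rightarrow> V \<Rightarrow> V" where
  "val I = wfrec (memrel\<^sup>+)
     (\<lambda>f \<tau>. mk (f ` {\<sigma>. \<exists>q\<in>I. vpair \<sigma> q \<in> elts \<tau>}))"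

definition forcing_ext :: "V set \<Rightarrow> V \<Rightarrow> V set \<Rightarrow> V set" where
  "forcing_ext u Pset I = val I ` names_in u Pset"

text \<open>States are the elements of I; accessibility is the ordering restricted to I.
Properties of states are modelled as predicates on states.\<close>

definition dia :: "V \<Rightarrow> V set \<Rightarrow> (V \<Rightarrow> bool) \<Rightarrow> V \<Rightarrow> bool" where
  "dia leP I \<psi> s \<longleftrightarrow> (\<exists>t\<in>I. leq leP s t \<and> \<psi> t)"

definition box :: "V \<Rightarrow> V set \<Rightarrow> (V \<Rightarrow> bool) \<Rightarrow> V \<Rightarrow> bool" where
  "box leP I \<psi> s \<longleftrightarrow> (\<forall>t\<in>I. leq leP s t \<longrightarrow> \<psi> t)"

definition model_valid :: "V set \<Rightarrow> (V \<Rightarrow> bool) \<Rightarrow> bool" where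
  "model_valid I \<psi> \<longleftrightarrow> (\<forall>s\<in>I. \<psi> s)"

definition in_star :: "V set \<Rightarrow> V \<Rightarrow> V \<Rightarrow> V \<Rightarrow> V \<Rightarrow> V \<Rightarrow> bool" where
  "in_star u Pset leP x y s \<longleftrightarrow>
     x \<in> names_in u Pset \<and> y \<in> names_in u Pset \<and>
     (\<exists>s'\<in>elts Pset. leq leP s' s \<and> vpair x s' \<in> elts y)"

definition tilde_in :: "V set \<Rightarrow> V \<Rightarrow> V \<Rightarrow> V set \<Rightarrow> (V \<times> V) set" where
  "tilde_in u Pset leP I =
     {(\<sigma>, \<tau>). \<sigma> \<in> names_in u Pset \<and> \<tau> \<in> names_in u Pset \<and>
        model_valid I (dia leP I (box leP I (in_star u Pset leP \<sigma> \<tau>)))}"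

definition mostowski :: "(V \<times> V) set \<Rightarrow> V \<Rightarrow> V" where
  "mostowski R = wfrec R (\<lambda>f \<tau>. mk (f ` {\<sigma>. (\<sigma>, \<tau>) \<in> R}))"

end

theory Submission
  imports Defs
begin

lemma elts_mk: "countable A \<Longrightarrow> elts (mk A) = A"
  by (simp add: mk_def acset_inverse)

lemma elts_mk_fin: "finite A \<Longrightarrow> elts (mk A) = A"
  by (simp add: elts_mk countable_finite)

lemma wf_memrel: "wf memrel"
proof (rule wfUNIVI)
  fix P :: "V \<Rightarrow> bool" and x
  assume H: "\<forall>x. (\<forall>y. (y, x) \<in> memrel \<longrightarrow> P y) \<longrightarrow> P x"
  show "P x"
  proof (induction x)
    case (Set A)
    then show ?case using H by (auto simp: memrel_def)
  qed
qed

lemma wf_tr: "wf (memrel\<^sup>+)"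
  using wf_memrel wf_trancl by blast

lemma vpair_mem: "vpair s q \<in> elts t \<Longrightarrow> (s, t) \<in> memrel\<^sup>+"
proof -
  assume a: "vpair s q \<in> elts t"
  have 1: "(s, mk {s}) \<in> memrel" by (simp add: memrel_def elts_mk_fin)
  have 2: "(mk {s}, vpair s q) \<in> memrel" by (simp add: memrel_def elts_mk_fin vpair_def)
  have 3: "(vpair s q, t) \<in> memrel" using a by (simp add: memrel_def)
  show ?thesis using 1 2 3 by (meson trancl.r_into_trancl trancl.trancl_into_trancl)
qed

lemma mk_fin_inj: "finite A \<Longrightarrow> finite B \<Longrightarrow> mk A = mk B \<Longrightarrow> A = B"
  by (metis elts_mk_fin)

lemma vpair_inj1: "vpair a b = vpair c d \<Longrightarrow> a = c"
proof -
  assume e: "vpair a b = vpair c d"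
  hence "{mk {a}, mk {a, b}} = {mk {c}, mk {c, d}}"
    unfolding vpair_def by (rule mk_fin_inj[rotated 2]) auto
  hence "mk {a} = mk {c} \<or> mk {a} = mk {c, d}" by blast
  thus "a = c"
  proof
    assume "mk {a} = mk {c}"
    hence "{a} = {c}" by (rule mk_fin_inj[rotated 2]) auto
    thus "a = c" by simp
  next
    assume "mk {a} = mk {c, d}"
    hence "{a} = {c, d}" by (rule mk_fin_inj[rotated 2]) auto
    thus "a = c" by (metis insertI1 singletonD)
  qed
qed

lemma name_sub:
  assumes "transitive_set u" "\<tau> \<in> names_in u Pset" "vpair \<sigma> q \<in> elts \<tau>"
  shows "\<sigma> \<in> names_in u Pset"
proof -
  have n: "is_name Pset \<tau>" "\<tau> \<in> u" using assms(2) by (auto simp: names_in_def)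
  from n(1) obtain s p where "vpair \<sigma> q = vpair s p" "is_name Pset s"
    using assms(3) by (cases rule: is_name.cases) blast
  hence ns: "is_name Pset \<sigma>" using vpair_inj1 by blast
  have "vpair \<sigma> q \<in> u" using assms(1,3) n(2) by (auto simp: transitive_set_def)
  hence "mk {\<sigma>} \<in> u" using assms(1) by (auto simp: transitive_set_def vpair_def elts_mk_fin)
  hence "\<sigma> \<in> u" using assms(1) by (auto simp: transitive_set_def elts_mk_fin)
  thus ?thesis using ns by (simp add: names_in_def)
qed

theorem mainTheorem5:
  fixes u :: "V set" and Pset leP zero :: V and I :: "V set"
  assumes "countable_transitive_ZF_minus_model u"
    and "Pset \<in> u" and "leP \<in> u" and "zero \<in> u"
    and "partial_order_least Pset leP zero"
    and "is_ideal Pset leP I" and "I \<noteq> {}"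
  shows "wf (tilde_in u Pset leP I)
     \<and> (\<forall>\<tau>\<in>names_in u Pset. mostowski (tilde_in u Pset leP I) \<tau> = val I \<tau>)
     \<and> mostowski (tilde_in u Pset leP I) ` names_in u Pset = forcing_ext u Pset I"
proof -
  define R where "R = tilde_in u Pset leP I"
  have tr: "transitive_set u" using assms(1) by (simp add: countable_transitive_ZF_minus_model_def)
  have po: "\<forall>p\<in>elts Pset. leq leP p p"
     "\<forall>p\<in>elts Pset. \<forall>q\<in>elts Pset. \<forall>r\<in>elts Pset. leq leP p q \<and> leq leP q r \<longrightarrow> leq leP p r"
    using assms(5) unfolding partial_order_least_def by blast+
  have id: "I \<subseteq> elts Pset" "\<forall>p\<in>I. \<forall>q\<in>elts Pset. leq leP q p \<longrightarrow> q \<in> I"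
     "\<forall>p\<in>I. \<forall>q\<in>I. \<exists>r\<in>I. leq leP p r \<and> leq leP q r"
    using assms(6) unfolding is_ideal_def by blast+
  have Rchar: "(\<sigma>, \<tau>) \<in> R \<longleftrightarrow> \<sigma> \<in> names_in u Pset \<and> \<tau> \<in> names_in u Pset \<and>
      (\<exists>q\<in>I. vpair \<sigma> q \<in> elts \<tau>)" for \<sigma> \<tau>
  proof
    assume a: "(\<sigma>, \<tau>) \<in> R"
    obtain s where s: "s \<in> I" using assms(7) by blast
    from a s obtain t where t: "t \<in> I" "leq leP s t"
      "\<forall>t'\<in>I. leq leP t t' \<longrightarrow> in_star u Pset leP \<sigma> \<tau> t'"
      by (auto simp: R_def tilde_in_def model_valid_def dia_def box_def)
    have "in_star u Pset leP \<sigma> \<tau> t" using t po(1) id(1) by blast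
    then obtain s' where "s' \<in> elts Pset" "leq leP s' t" "vpair \<sigma> s' \<in> elts \<tau>"
      by (auto simp: in_star_def)
    moreover hence "s' \<in> I" using id(2) t(1) by blast
    ultimately show "\<sigma> \<in> names_in u Pset \<and> \<tau> \<in> names_in u Pset \<and> (\<exists>q\<in>I. vpair \<sigma> q \<in> elts \<tau>)"
      using a by (auto simp: R_def tilde_in_def)
  next
    assume a: "\<sigma> \<in> names_in u Pset \<and> \<tau> \<in> names_in u Pset \<and> (\<exists>q\<in>I. vpair \<sigma> q \<in> elts \<tau>)"
    then obtain q where q: "q \<in> I" "vpair \<sigma> q \<in> elts \<tau>" by blast
    have "dia leP I (box leP I (in_star u Pset leP \<sigma> \<tau>)) s" if s: "s \<in> I" for s
    proof -
      obtain t where t: "t \<in> I" "leq leP s t" "leq leP q t" using id(3) s q(1) by blast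
      have "in_star u Pset leP \<sigma> \<tau> t'" if "t' \<in> I" "leq leP t t'" for t'
      proof -
        have "leq leP q t'" using po(2) t q(1) that id(1) by blast
        thus ?thesis using a q id(1) by (auto simp: in_star_def)
      qed
      thus ?thesis using t by (auto simp: dia_def box_def)
    qed
    thus "(\<sigma>, \<tau>) \<in> R" using a by (auto simp: R_def tilde_in_def model_valid_def)
  qed
  have sub: "R \<subseteq> memrel\<^sup>+" using Rchar vpair_mem by auto
  have wfR: "wf R" using wf_subset[OF wf_tr sub] .
  have mos: "mostowski R \<tau> = mk (mostowski R ` {\<sigma>. (\<sigma>, \<tau>) \<in> R})" for \<tau>
  proof -
    have "mostowski R \<tau> = mk (cut (mostowski R) R \<tau> ` {\<sigma>. (\<sigma>, \<tau>) \<in> R})"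
      unfolding mostowski_def by (subst wfrec[OF wfR]) simp
    also have "cut (mostowski R) R \<tau> ` {\<sigma>. (\<sigma>, \<tau>) \<in> R} = mostowski R ` {\<sigma>. (\<sigma>, \<tau>) \<in> R}"
      by (auto simp: cut_apply)
    finally show ?thesis .
  qed
  have vl: "val I \<tau> = mk (val I ` {\<sigma>. \<exists>q\<in>I. vpair \<sigma> q \<in> elts \<tau>})" for \<tau>
  proof -
    have "val I \<tau> = mk (cut (val I) (memrel\<^sup>+) \<tau> ` {\<sigma>. \<exists>q\<in>I. vpair \<sigma> q \<in> elts \<tau>})"
      unfolding val_def by (subst wfrec[OF wf_tr]) simp
    also have "cut (val I) (memrel\<^sup>+) \<tau> ` {\<sigma>. \<exists>q\<in>I. vpair \<sigma> q \<in> elts \<tau>}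
       = val I ` {\<sigma>. \<exists>q\<in>I. vpair \<sigma> q \<in> elts \<tau>}"
      by (rule image_cong[OF refl]) (auto intro: cut_apply[OF vpair_mem])
    finally show ?thesis .
  qed
  have eq: "\<tau> \<in> names_in u Pset \<longrightarrow> mostowski R \<tau> = val I \<tau>" for \<tau>
  proof (induction \<tau> rule: wf_induct[OF wf_tr])
    case (1 \<tau>)
    show ?case
    proof
      assume nt: "\<tau> \<in> names_in u Pset"
      have S: "{\<sigma>. (\<sigma>, \<tau>) \<in> R} = {\<sigma>. \<exists>q\<in>I. vpair \<sigma> q \<in> elts \<tau>}"
        using Rchar nt name_sub[OF tr nt] by blast
      have "mostowski R ` {\<sigma>. (\<sigma>, \<tau>) \<in> R} = val I ` {\<sigma>. \<exists>q\<in>I. vpair \<sigma> q \<in> elts \<tau>}"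
        unfolding S
      proof (rule image_cong[OF refl])
        fix \<sigma> assume "\<sigma> \<in> {\<sigma>. \<exists>q\<in>I. vpair \<sigma> q \<in> elts \<tau>}"
        then obtain q where "vpair \<sigma> q \<in> elts \<tau>" by blast
        thus "mostowski R \<sigma> = val I \<sigma>"
          using 1 vpair_mem name_sub[OF tr nt] by blast
      qed
      thus "mostowski R \<tau> = val I \<tau>" using mos[of \<tau>] vl[of \<tau>] by simp
    qed
  qed
  show ?thesis unfolding R_def[symmetric] forcing_ext_def
    using wfR eq by (auto simp: image_def)
qed

end
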